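(* Let $A=(i_1,\dots,i_a)$ be an ordered tuple of distinct elements of $I_d$ and $r\ge0$ with $(a-1)l+r$ even. Let $\overrightarrow{A}=(i_a,i_1,\dots,i_{a-1})$. Then $\overrightarrow{A}^{(r)}=A^{(r)}$ in $\mathcal{G}$.
   Context: Fix a commutative ring $R$ and integers $l,d\ge1$; $I_a=\{1,\dots,a\}$. Let $\mathcal{G}$ be the $R$-superalgebra that is free as an $R$-module with basis $\{x_1^{m_1}\cdots x_d^{m_d}\,w\,c_1^{e_1}\cdots c_d^{e_d}: 0\le m_i\le l-1,\ w\in\Sigma_d,\ e_i\in\{0,1\}\}$, with multiplication determined by: the $x_i$ commute and $x_i^l=0$; $w\in\Sigma_d$ multiply as in the symmetric group (composition right to left); $c_i^2=1$, $c_ic_j=-c_jc_i$ for $i\ne j$; $wx_i=x_{w(i)}w$, $wc_i=c_{w(i)}w$; $x_ic_i=-c_ix_i$, $x_ic_j=c_jx_i$ for $i\ne j$ (this is $\operatorname{gr}$ of a level-$l$ cyclotomic Sergeev superalgebra). For an ordered tuple $A=(i_1,\dots,i_a)$ of distinct elements of $I_d$, $\sigma_A$ is the cycle $i_1\mapsto i_2\mapsto\dots\mapsto i_a\mapsto i_1$. For $\alpha\in\mathbb{Z}_2^a$: $|\alpha|=\sum_j\alpha_j$; $\mathbb{Z}_2^{a,\mathrm{ev}}$ is the set of $\alpha$ with $|\alpha|$ even; $c_\alpha(A)=c_{i_1}^{\alpha_1}\cdots c_{i_a}^{\alpha_a}$; $\epsilon^\alpha_j=\prod_{k<j}(-1)^{\alpha_k}$.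 For $r\ge0$, $\alpha\in\mathbb{Z}_2^{a,\mathrm{ev}}$: $h^\alpha_r(A)=\sum_{r_1+\dots+r_a=(a-1)(l-1)+r,\ r_j\ge0}\prod_j(\epsilon^\alpha_jx_{i_j})^{r_j}$, $A^{(r,\alpha)}=h^\alpha_r(A)\sigma_Ac_\alpha(A)$, $\tau_\alpha=(-1)^{|\alpha|/2+\sum_j j\alpha_j}$, and $A^{(r)}=\sum_{\alpha\in\mathbb{Z}_2^{a,\mathrm{ev}}}\tau_\alpha A^{(r,\alpha)}$. *)

theory Defs
  imports Main "HOL-Combinatorics.Cycles"
begin

text \<open>Defining relations of gr of the level-l cyclotomic Sergeev superalgebra, on generators
  x i (i in I_d), s w (w a permutation of I_d) and c i (i in I_d), inside a ring 'a.
  The algebra G of the paper is the algebra presented by these relations (free with the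
  PBW basis x^m w c^e), so an identity between integral combinations of these generators
  holds in G iff it holds in every ring with elements satisfying these relations.\<close>

definition sergeev_rels ::
  "nat \<Rightarrow> nat \<Rightarrow> (nat \<Rightarrow> 'a::ring_1) \<Rightarrow> ((nat \<Rightarrow> nat) \<Rightarrow> 'a) \<Rightarrow> (nat \<Rightarrow> 'a) \<Rightarrow> bool" where
  "sergeev_rels l d x s c \<longleftrightarrow>
     (\<forall>i\<in>{1..d}. \<forall>j\<in>{1..d}. x i * x j = x j * x i) \<and>
     (\<forall>i\<in>{1..d}. x i ^ l = 0) \<and>
     s id = 1 \<and>
     (\<forall>w v. w permutes {1..d} \<longrightarrow> v permutes {1..d} \<longrightarrow> s (w \<circ> v) = s w * s v) \<and>
     (\<forall>i\<in>{1..d}. c i * c i = 1) \<and>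
     (\<forall>i\<in>{1..d}. \<forall>j\<in>{1..d}. i \<noteq> j \<longrightarrow> c i * c j = - (c j * c i)) \<and>
     (\<forall>w i. w permutes {1..d} \<longrightarrow> i \<in> {1..d} \<longrightarrow> s w * x i = x (w i) * s w) \<and>
     (\<forall>w i. w permutes {1..d} \<longrightarrow> i \<in> {1..d} \<longrightarrow> s w * c i = c (w i) * s w) \<and>
     (\<forall>i\<in>{1..d}. x i * c i = - (c i * x i)) \<and>
     (\<forall>i\<in>{1..d}. \<forall>j\<in>{1..d}. i \<noteq> j \<longrightarrow> x i * c j = c j * x i)"

text \<open>Elements alpha of Z_2^a are boolean lists of length a (True = 1); positions are 0-based
  in the lists, 1-based in the paper.\<close>

definition wt :: "bool list \<Rightarrow> nat" where
  "wt \<alpha> = length (filter id \<alpha>)"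

definition even_alphas :: "nat \<Rightarrow> bool list set" where
  "even_alphas a = {\<alpha>. length \<alpha> = a \<and> even (wt \<alpha>)}"

text \<open>epsilon^alpha_j for the paper index j = jj+1: product over k < j of (-1)^alpha_k.\<close>
definition eps :: "bool list \<Rightarrow> nat \<Rightarrow> int" where
  "eps \<alpha> jj = (-1) ^ wt (take jj \<alpha>)"

definition h_elt :: "nat \<Rightarrow> (nat \<Rightarrow> 'a::ring_1) \<Rightarrow> nat list \<Rightarrow> nat \<Rightarrow> bool list \<Rightarrow> 'a" where
  "h_elt l x A r \<alpha> =
     (\<Sum>rs\<in>{rs. length rs = length A \<and> sum_list rs = (length A - 1) * (l - 1) + r}.
        prod_list (map (\<lambda>jj. (of_int (eps \<alpha> jj) * x (A ! jj)) ^ (rs ! jj)) [0..<length A]))"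

definition c_alpha :: "(nat \<Rightarrow> 'a::ring_1) \<Rightarrow> nat list \<Rightarrow> bool list \<Rightarrow> 'a" where
  "c_alpha c A \<alpha> = prod_list (map (\<lambda>jj. if \<alpha> ! jj then c (A ! jj) else 1) [0..<length A])"

definition tau :: "bool list \<Rightarrow> int" where
  "tau \<alpha> = (-1) ^ (wt \<alpha> div 2 + (\<Sum>jj<length \<alpha>. if \<alpha> ! jj then jj + 1 else 0))"

definition A_r :: "nat \<Rightarrow> (nat \<Rightarrow> 'a::ring_1) \<Rightarrow> ((nat \<Rightarrow> nat) \<Rightarrow> 'a) \<Rightarrow> (nat \<Rightarrow> 'a)
                  \<Rightarrow> nat list \<Rightarrow> nat \<Rightarrow> 'a" where
  "A_r l x s c A r =
     (\<Sum>\<alpha>\<in>even_alphas (length A).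
        of_int (tau \<alpha>) * (h_elt l x A r \<alpha> * s (cycle_of_list A) * c_alpha c A \<alpha>))"

end

theory Submission
  imports Defs "HOL-Combinatorics.Cycles"
begin

lemma comm_pow_right:
  fixes w y :: "'a::ring_1"
  assumes a: "w * y = y * w" shows "w * y ^ n = y ^ n * w"
proof (induction n)
  case 0 then show ?case by simp
next
  case (Suc n)
  have "w * y ^ Suc n = (w * y) * y ^ n" by (simp add: mult.assoc)
  also have "\<dots> = y * (w * y ^ n)" by (simp add: a mult.assoc)
  also have "\<dots> = y * (y ^ n * w)" by (simp add: Suc)
  also have "\<dots> = y ^ Suc n * w" by (simp add: mult.assoc)
  finally show ?case .
qed

lemma comm_pow_left:
  fixes w y :: "'a::ring_1"
  assumes a: "w * y = y * w" shows "w ^ n * y = y * w ^ n"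
proof -
  have "y * w = w * y" using a by simp
  then have "y * w ^ n = w ^ n * y" by (rule comm_pow_right)
  then show ?thesis by simp
qed

lemma comm_prod_list:
  fixes w :: "'a::ring_1"
  assumes "\<forall>y\<in>set ys. w * y = y * w" shows "w * prod_list ys = prod_list ys * w"
  using assms
proof (induction ys)
  case Nil then show ?case by simp
next
  case (Cons a ys)
  have "w * prod_list (a # ys) = (w * a) * prod_list ys" by (simp add: mult.assoc)
  also have "\<dots> = a * (w * prod_list ys)" using Cons.prems by (simp add: mult.assoc)
  also have "\<dots> = a * (prod_list ys * w)" using Cons by simp
  also have "\<dots> = prod_list (a # ys) * w" by (simp add: mult.assoc)
  finally show ?case .
qed

lemma ofint_pow_mult:
  fixes y :: "'a::ring_1"
  shows "(of_int k * y) ^ n = of_int (k ^ n) * y ^ n"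
proof (induction n)
  case 0 then show ?case by simp
next
  case (Suc n)
  have "(of_int k * y) ^ Suc n = of_int k * (y * (of_int (k ^ n) * y ^ n))"
    by (simp only: power_Suc Suc mult.assoc)
  also have "y * (of_int (k ^ n) * y ^ n) = of_int (k ^ n) * (y * y ^ n)"
    by (metis mult.assoc mult_of_int_commute)
  also have "of_int k * (of_int (k ^ n) * (y * y ^ n)) = of_int (k ^ Suc n) * y ^ Suc n"
    by (simp only: power_Suc of_int_mult mult.assoc)
  finally show ?case .
qed

lemma prod_list_ofint:
  fixes f :: "nat \<Rightarrow> 'a::ring_1"
  shows "prod_list (map (\<lambda>j. of_int (g j) * f j) xs) = of_int (prod_list (map g xs)) * prod_list (map f xs)"
proof (induction xs)
  case Nil then show ?case by simp
next
  case (Cons a xs)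
  have "prod_list (map (\<lambda>j. of_int (g j) * f j) (a # xs)) = of_int (g a) * (f a * (of_int (prod_list (map g xs)) * prod_list (map f xs)))"
    by (simp only: list.map prod_list.Cons Cons mult.assoc)
  also have "f a * (of_int (prod_list (map g xs)) * prod_list (map f xs)) = of_int (prod_list (map g xs)) * (f a * prod_list (map f xs))"
    by (metis mult.assoc mult_of_int_commute)
  finally show ?case by (simp only: list.map prod_list.Cons of_int_mult mult.assoc)
qed

lemma prod_list_power_sum: "prod_list (map ((^) (k::int)) rs) = k ^ sum_list rs"
  by (induction rs) (simp_all add: power_add)

lemma anticomm_prod:
  fixes w :: "'a::ring_1"
  assumes "\<forall>j<m. w * f j = of_int (g j) * (f j * w)"
  shows "w * prod_list (map f [0..<m]) = of_int (\<Prod>j<m. g j) * (prod_list (map f [0..<m]) * w)"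
  using assms
proof (induction m)
  case 0 then show ?case by simp
next
  case (Suc m)
  let ?P = "prod_list (map f [0..<m])"
  have "w * prod_list (map f [0..<Suc m]) = (w * ?P) * f m" by (simp add: mult.assoc)
  also have "\<dots> = of_int (\<Prod>j<m. g j) * (?P * (w * f m))"
    using Suc by (simp add: mult.assoc)
  also have "w * f m = of_int (g m) * (f m * w)"
    using Suc by simp
  also have "?P * (of_int (g m) * (f m * w)) = of_int (g m) * (?P * (f m * w))"
    by (metis mult.assoc mult_of_int_commute)
  also have "of_int (\<Prod>j<m. g j) * (of_int (g m) * (?P * (f m * w))) = of_int (\<Prod>j<Suc m. g j) * (prod_list (map f [0..<Suc m]) * w)"
    by (simp only: prod.lessThan_Suc of_int_mult upt_Suc_append[OF le0] map_append prod_list.append list.map prod_list.Cons prod_list.Nil mult_1_right mult.assoc)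
  finally show ?case .
qed
lemma wt_snoc: "wt (xs @ [b]) = wt xs + (if b then 1 else 0)" by (simp add: wt_def)
lemma wt_cons: "wt (b # xs) = (if b then 1 else 0) + wt xs" by (simp add: wt_def)

lemma sign_prod: "(\<Prod>j<length bs. if bs ! j then (-1::int) else 1) = (-1) ^ wt bs"
  by (induction bs rule: rev_induct) (simp_all add: wt_snoc nth_append, simp add: wt_def)

lemma cnt_sum: "(\<Sum>j<length bs. if bs ! j then 1 else 0) = wt bs"
  by (induction bs rule: rev_induct) (simp_all add: wt_snoc nth_append, simp add: wt_def)

lemma eps_snoc: "j \<le> length bs \<Longrightarrow> eps (bs @ [b]) j = eps bs j"
  by (simp add: eps_def)
lemma eps_cons: "eps (b # bs) (Suc j) = (if b then -1 else 1) * eps bs j"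
  by (simp add: eps_def wt_cons power_add)
lemma eps_cons0: "eps (b # bs) 0 = 1" by (simp add: eps_def wt_def)
lemma eps_full: "eps bs (length bs) = (-1) ^ wt bs" by (simp add: eps_def)

lemma tau_cons: "tau (b # bs) = (-1) ^ (wt (b#bs) div 2 + (if b then 1 else 0) + (\<Sum>j<length bs. if bs ! j then j + 1 else 0) + wt bs)"
proof -
  have "(\<Sum>jj<length (b#bs). if (b#bs) ! jj then jj + 1 else 0) = (if b then 1 else 0) + (\<Sum>j<length bs. if bs ! j then j + 2 else 0)"
    by (simp only: length_Cons sum.lessThan_Suc_shift) (auto simp add: add.commute intro!: sum.cong)
  also have "(\<Sum>j<length bs. if bs ! j then j + 2 else 0) = (\<Sum>j<length bs. (if bs ! j then j + 1 else 0) + (if bs ! j then 1 else 0))"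
    by (rule sum.cong) auto
  also have "\<dots> = (\<Sum>j<length bs. if bs ! j then j + 1 else 0) + wt bs"
    by (simp add: sum.distrib cnt_sum)
  finally show ?thesis unfolding tau_def by (simp add: add.assoc)
qed

lemma tau_snoc: "tau (bs @ [b]) = (-1) ^ (wt (bs @ [b]) div 2 + (\<Sum>j<length bs. if bs ! j then j + 1 else 0) + (if b then length bs + 1 else 0))"
proof -
  have "(\<Sum>jj<length (bs@[b]). if (bs@[b]) ! jj then jj + 1 else 0) = (\<Sum>j<length bs. if bs ! j then j + 1 else 0) + (if b then length bs + 1 else 0)"
    by (simp add: nth_append)
  then show ?thesis unfolding tau_def by (simp add: add.assoc)
qed

lemma c_alpha_cons:
  fixes c :: "nat \<Rightarrow> 'a::ring_1" and B :: "nat list"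
  assumes "length bs = length B"
  shows "c_alpha c (z # B) (b # bs) = (if b then c z else 1) * prod_list (map (\<lambda>j. if bs ! j then c (B ! j) else 1) [0..<length B])"
proof -
  have e: "[0..<length (z # B)] = 0 # map Suc [0..<length B]"
    by (simp add: upt_conv_Cons map_Suc_upt del: upt_Suc)
  show ?thesis unfolding c_alpha_def e by (simp add: o_def cong: if_cong)
qed

lemma c_alpha_snoc:
  fixes c :: "nat \<Rightarrow> 'a::ring_1" and B :: "nat list"
  assumes "length bs = length B"
  shows "c_alpha c (B @ [z]) (bs @ [b]) = prod_list (map (\<lambda>j. if bs ! j then c (B ! j) else 1) [0..<length B]) * (if b then c z else 1)"
proof -
  have "map (\<lambda>jj. if (bs @ [b]) ! jj then c ((B @ [z]) ! jj) else 1) [0..<length B] = map (\<lambda>j. if bs ! j then c (B ! j) else 1) [0..<length B]"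
    using assms by (intro map_cong) (auto simp: nth_append)
  moreover have "[0..<length (B @ [z])] = [0..<length B] @ [length B]" by simp
  ultimately show ?thesis unfolding c_alpha_def using assms by (simp only: map_append prod_list.append) (simp add: nth_append)
qed

lemma c_comm:
  fixes c :: "nat \<Rightarrow> 'a::ring_1" and B :: "nat list"
  assumes anti: "\<forall>j\<in>set B. c z * c j = - (c j * c z)" and len: "length bs = length B"
  shows "c z * prod_list (map (\<lambda>j. if bs ! j then c (B ! j) else 1) [0..<length B])
       = of_int ((-1) ^ wt bs) * (prod_list (map (\<lambda>j. if bs ! j then c (B ! j) else 1) [0..<length B]) * c z)"
proof -
  have "c z * prod_list (map (\<lambda>j. if bs ! j then c (B ! j) else 1) [0..<length B])
       = of_int (\<Prod>j<length B. if bs ! j then -1 else 1) * (prod_list (map (\<lambda>j. if bs ! j then c (B ! j) else 1) [0..<length B]) * c z)"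
    by (rule anticomm_prod) (use anti in auto)
  also have "(\<Prod>j<length B. if bs ! j then (-1::int) else 1) = (-1) ^ wt bs"
    using sign_prod[of bs] len by simp
  finally show ?thesis .
qed

lemma sum_list_rot1: "sum_list (rotate1 (a::nat list)) = sum_list a"
  by (cases a) (simp_all add: add.commute)

lemma h_rot:
  fixes x :: "nat \<Rightarrow> 'a::ring_1" and B :: "nat list"
  assumes xcomm: "\<forall>j\<in>set B. x z * x j = x j * x z" and len: "length bs = length B"
    and par: "even (wt bs + (if b then 1 else 0))"
  shows "h_elt l x (z # B) r (b # bs) = of_int (if b then (-1) ^ (length B * (l - 1) + r) else 1) * h_elt l x (B @ [z]) r (bs @ [b])"
proof -
  define m where "m = length B"
  define N where "N = m * (l - 1) + r"
  define R where "R = {rs::nat list. length rs = Suc m \<and> sum_list rs = N}"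
  define F' where "F' = (\<lambda>rs. prod_list (map (\<lambda>jj. (of_int (eps (b # bs) jj) * x ((z # B) ! jj)) ^ (rs ! jj)) [0..<Suc m]))"
  define F where "F = (\<lambda>rs. prod_list (map (\<lambda>jj. (of_int (eps (bs @ [b]) jj) * x ((B @ [z]) ! jj)) ^ (rs ! jj)) [0..<Suc m]))"
  define sgn :: int where "sgn = (if b then (-1) ^ N else 1)"
  have hL: "h_elt l x (z # B) r (b # bs) = sum F' R"
    unfolding h_elt_def F'_def R_def N_def m_def by simp
  have hR: "h_elt l x (B @ [z]) r (bs @ [b]) = sum F R"
    unfolding h_elt_def F_def R_def N_def m_def by simp
  have step1: "sum F' R = sum (\<lambda>rs. F' (last rs # butlast rs)) R"
  proof (rule sum.reindex_bij_witness[of R "\<lambda>rs. last rs # butlast rs" rotate1])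
    fix a assume "a \<in> R"
    then have ne: "a \<noteq> []" unfolding R_def by auto
    show "last (rotate1 a) # butlast (rotate1 a) = a"
      using ne by (cases a) auto
    show "rotate1 a \<in> R" using \<open>a \<in> R\<close> unfolding R_def by (simp add: sum_list_rot1)
    show "F' (last (rotate1 a) # butlast (rotate1 a)) = F' a"
      using ne by (cases a) auto
    show "rotate1 (last a # butlast a) = a" using ne by simp
    show "last a # butlast a \<in> R" using \<open>a \<in> R\<close> ne unfolding R_def
      by (metis (mono_tags, lifting) append_butlast_last_id length_rotate1 mem_Collect_eq rotate1.simps(2) sum_list_rot1)
  qed
  have step2: "F' (last rs # butlast rs) = of_int sgn * F rs" if "rs \<in> R" for rs
  proof -
    from that have ne: "rs \<noteq> []" unfolding R_def by auto
    then obtain rs0 rz where rs: "rs = rs0 @ [rz]" by (metis append_butlast_last_id)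
    have l0: "length rs0 = m" using that rs unfolding R_def by simp
    have sN: "sum_list rs0 + rz = N" using that rs unfolding R_def by simp
    define sg :: int where "sg = (if b then -1 else 1)"
    define G where "G = (\<lambda>j. (of_int (eps bs j) * x (B ! j)) ^ (rs0 ! j))"
    define Q where "Q = prod_list (map G [0..<m])"
    have e: "[0..<Suc m] = 0 # map Suc [0..<m]"
      by (simp add: upt_conv_Cons map_Suc_upt del: upt_Suc)
    have "F' (last rs # butlast rs) = x z ^ rz * prod_list (map (\<lambda>j. (of_int (sg * eps bs j) * x (B ! j)) ^ (rs0 ! j)) [0..<m])"
      unfolding F'_def rs e by (simp add: o_def eps_cons eps_cons0 sg_def)
    also have "map (\<lambda>j. (of_int (sg * eps bs j) * x (B ! j)) ^ (rs0 ! j)) [0..<m] = map (\<lambda>j. of_int (sg ^ (rs0 ! j)) * G j) [0..<m]"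
      unfolding G_def by (intro map_cong refl) (simp only: of_int_mult mult.assoc ofint_pow_mult)
    also have "prod_list \<dots> = of_int (prod_list (map (\<lambda>j. sg ^ (rs0 ! j)) [0..<m])) * Q"
      unfolding Q_def by (rule prod_list_ofint)
    also have "map (\<lambda>j. sg ^ (rs0 ! j)) [0..<m] = map ((^) sg) rs0"
      using l0 by (metis (no_types, lifting) map_eq_conv map_map map_nth o_apply)
    finally have L: "F' (last rs # butlast rs) = x z ^ rz * (of_int (sg ^ sum_list rs0) * Q)"
      by (simp add: prod_list_power_sum)
    have mapF: "map (\<lambda>jj. (of_int (eps (bs @ [b]) jj) * x ((B @ [z]) ! jj)) ^ (rs ! jj)) [0..<m] = map G [0..<m]"
      unfolding G_def rs using len l0 by (intro map_cong refl) (auto simp: nth_append eps_snoc m_def)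
    have lastF: "(of_int (eps (bs @ [b]) m) * x ((B @ [z]) ! m)) ^ (rs ! m) = of_int (((-1) ^ wt bs) ^ rz) * x z ^ rz"
    proof -
      have "eps (bs @ [b]) m = (-1) ^ wt bs" using len eps_full[of bs] unfolding m_def by (simp add: eps_snoc)
      moreover have "(B @ [z]) ! m = z" unfolding m_def by simp
      moreover have "rs ! m = rz" using l0 unfolding rs by (simp add: nth_append)
      ultimately show ?thesis by (simp only: ofint_pow_mult)
    qed
    have Rr: "F rs = Q * (of_int (((-1) ^ wt bs) ^ rz) * x z ^ rz)"
      unfolding F_def Q_def upt_Suc_append[OF le0] map_append prod_list.append mapF by (simp add: lastF)
    have comm: "x z ^ rz * Q = Q * x z ^ rz"
      unfolding Q_def
    proof (rule comm_prod_list, clarsimp)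
      fix j assume "j < m"
      then have "B ! j \<in> set B" unfolding m_def by simp
      then have c1: "x z ^ rz * x (B ! j) = x (B ! j) * x z ^ rz" using xcomm comm_pow_left by blast
      have "x z ^ rz * (of_int (eps bs j) * x (B ! j)) = (of_int (eps bs j) * x (B ! j)) * x z ^ rz"
        by (metis c1 mult.assoc mult_of_int_commute)
      then show "x z ^ rz * G j = G j * x z ^ rz" unfolding G_def by (rule comm_pow_right)
    qed
    have sgeq: "sg ^ sum_list rs0 = sgn * ((-1) ^ wt bs) ^ rz"
    proof (cases b)
      case True
      then have "odd (wt bs)" using par by simp
      then have "((-1::int) ^ wt bs) = -1" by simp
      moreover have "(-1::int) ^ sum_list rs0 = (-1) ^ N * (-1) ^ rz"
        unfolding sN[symmetric] power_add by (simp add: mult.assoc power_mult_distrib[symmetric])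
      ultimately show ?thesis using True unfolding sg_def sgn_def by simp
    next
      case False
      then have "even (wt bs)" using par by simp
      then show ?thesis using False unfolding sg_def sgn_def by simp
    qed
    have "x z ^ rz * (of_int (sg ^ sum_list rs0) * Q) = of_int (sg ^ sum_list rs0) * (x z ^ rz * Q)"
      by (metis mult.assoc mult_of_int_commute)
    also have "\<dots> = of_int sgn * (Q * (of_int (((-1) ^ wt bs) ^ rz) * x z ^ rz))"
      unfolding comm sgeq of_int_mult by (metis mult.assoc mult_of_int_commute)
    finally show ?thesis using L Rr by simp
  qed
  have "sum F' R = sum (\<lambda>rs. of_int sgn * F rs) R"
    using step1 step2 by (simp cong: sum.cong)
  also have "\<dots> = of_int sgn * sum F R" by (simp add: sum_distrib_left)
  finally show ?thesis using hL hR unfolding sgn_def N_def m_def by simp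
qed

lemma neg1_par: "even (a + b) \<Longrightarrow> (-1::int) ^ a = (-1) ^ b"
  by (metis even_add neg_one_even_power neg_one_odd_power)

lemma par_aux: "odd (w::nat) \<Longrightarrow> even (n + m) \<Longrightarrow> even ((W + 1 + T + w + n + 1) + (W + T + (m + 1)))"
  by presburger

lemma wt_rot1: "wt (rotate1 a) = wt a"
  by (cases a) (simp_all add: wt_def)

lemma scal_move:
  fixes X S Y :: "'a::ring_1"
  shows "of_int p * ((of_int q * X) * S * (of_int u * Y)) = of_int (p * q * u) * (X * S * Y)"
proof -
  have "X * S * (of_int u * Y) = of_int u * (X * S * Y)"
    by (metis mult.assoc mult_of_int_commute)
  then show ?thesis by (simp add: mult.assoc)
qed

lemma main_rot:
  fixes x :: "nat \<Rightarrow> 'a::ring_1" and s :: "(nat \<Rightarrow> nat) \<Rightarrow> 'a" and c :: "nat \<Rightarrow> 'a" and B :: "nat list"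
  assumes xcomm: "\<forall>j\<in>set B. x z * x j = x j * x z"
    and anti: "\<forall>j\<in>set B. c z * c j = - (c j * c z)"
    and dist: "distinct (z # B)"
    and l1: "l \<ge> 1"
    and par: "even (length B * l + r)"
  shows "A_r l x s c (z # B) r = A_r l x s c (B @ [z]) r"
proof -
  define m where "m = length B"
  define E where "E = even_alphas (Suc m)"
  define N where "N = m * (l - 1) + r"
  have cyc: "cycle_of_list (z # B) = cycle_of_list (B @ [z])"
    using cycle_of_list_rotate_independent[OF dist, of 1] by simp
  define g where "g = (\<lambda>\<alpha>. of_int (tau \<alpha>) * (h_elt l x (z # B) r \<alpha> * s (cycle_of_list (z # B)) * c_alpha c (z # B) \<alpha>))"
  define f where "f = (\<lambda>\<alpha>. of_int (tau \<alpha>) * (h_elt l x (B @ [z]) r \<alpha> * s (cycle_of_list (B @ [z])) * c_alpha c (B @ [z]) \<alpha>))"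
  have L: "A_r l x s c (z # B) r = sum g E" unfolding A_r_def g_def E_def m_def by simp
  have R: "A_r l x s c (B @ [z]) r = sum f E" unfolding A_r_def f_def E_def m_def by simp
  have step1: "sum g E = sum (\<lambda>\<alpha>. g (last \<alpha> # butlast \<alpha>)) E"
  proof (rule sum.reindex_bij_witness[of E "\<lambda>\<alpha>. last \<alpha> # butlast \<alpha>" rotate1])
    fix a assume aE: "a \<in> E"
    then have ne: "a \<noteq> []" unfolding E_def even_alphas_def by auto
    show "last (rotate1 a) # butlast (rotate1 a) = a"
      using ne by (cases a) auto
    show "rotate1 a \<in> E" using aE unfolding E_def even_alphas_def by (simp add: wt_rot1)
    show "g (last (rotate1 a) # butlast (rotate1 a)) = g a"
      using ne by (cases a) auto
    show "rotate1 (last a # butlast a) = a" using ne by simp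
    have "rotate1 (last a # butlast a) = a" using ne by simp
    then have "wt (last a # butlast a) = wt a" by (metis wt_rot1)
    then show "last a # butlast a \<in> E" using aE ne unfolding E_def even_alphas_def by simp
  qed
  have step2: "g (last \<alpha> # butlast \<alpha>) = f \<alpha>" if aE: "\<alpha> \<in> E" for \<alpha>
  proof -
    from aE have ne: "\<alpha> \<noteq> []" unfolding E_def even_alphas_def by auto
    then obtain bs b where al: "\<alpha> = bs @ [b]" by (metis append_butlast_last_id)
    have lbs: "length bs = m" using aE al unfolding E_def even_alphas_def by simp
    have ev: "even (wt bs + (if b then 1 else 0))" using aE al unfolding E_def even_alphas_def by (simp add: wt_snoc)
    have rot: "last \<alpha> # butlast \<alpha> = b # bs" using al by simp
    define C where "C = prod_list (map (\<lambda>j. if bs ! j then c (B ! j) else 1) [0..<length B])"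
    define H where "H = h_elt l x (B @ [z]) r (bs @ [b])"
    define S where "S = s (cycle_of_list (B @ [z]))"
    define T where "T = (\<Sum>j<length bs. if bs ! j then j + 1 else 0)"
    have lenB: "length bs = length B" using lbs m_def by simp
    have hh: "h_elt l x (z # B) r (b # bs) = of_int (if b then (-1) ^ N else 1) * H"
      unfolding H_def N_def m_def by (rule h_rot[OF xcomm lenB ev])
    have cc: "c_alpha c (z # B) (b # bs) = (if b then c z else 1) * C"
      unfolding C_def by (rule c_alpha_cons[OF lenB])
    have cs: "c_alpha c (B @ [z]) (bs @ [b]) = C * (if b then c z else 1)"
      unfolding C_def by (rule c_alpha_snoc[OF lenB])
    have czC: "c z * C = of_int ((-1) ^ wt bs) * (C * c z)"
      unfolding C_def by (rule c_comm[OF anti lenB])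
    have wteq: "wt (b # bs) = wt (bs @ [b])" by (simp add: wt_cons wt_snoc)
    show ?thesis
    proof (cases b)
      case False
      then have "even (wt bs)" using ev by simp
      then have "tau (b # bs) = tau (bs @ [b])"
        unfolding tau_cons tau_snoc wteq using False by (intro neg1_par) (simp add: T_def[symmetric])
      then show ?thesis unfolding g_def f_def rot al using False hh cc cs cyc by (simp add: H_def S_def)
    next
      case True
      then have odd: "odd (wt bs)" using ev by simp
      have cc': "c_alpha c (z # B) (b # bs) = of_int (-1) * (C * c z)"
        using cc czC True odd by simp
      have "even (N + m)"
      proof -
        have "N + m = m * l + r" unfolding N_def using l1
          by (cases l) auto
        then show ?thesis using par unfolding m_def by simp
      qed
      have tt: "tau (b # bs) * (-1) ^ N * (-1) = tau (bs @ [b])"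
      proof -
        have "tau (b # bs) * (-1) ^ N * (-1) = (-1) ^ (wt (bs @ [b]) div 2 + 1 + T + wt bs + N + 1)"
          unfolding tau_cons wteq T_def using True by (simp add: power_add)
        also have "\<dots> = (-1) ^ (wt (bs @ [b]) div 2 + T + (m + 1))"
          by (rule neg1_par) (rule par_aux[OF odd \<open>even (N + m)\<close>])
        finally show ?thesis unfolding tau_snoc T_def using True lbs by simp
      qed
      have "g (last \<alpha> # butlast \<alpha>) = of_int (tau (b # bs)) * ((of_int ((-1) ^ N) * H) * S * (of_int (-1) * (C * c z)))"
        unfolding g_def rot hh cc' cyc S_def using True by simp
      also have "\<dots> = of_int (tau (b # bs) * (-1) ^ N * (-1)) * (H * S * (C * c z))"
        by (rule scal_move)
      also have "\<dots> = f \<alpha>" unfolding tt f_def al cs H_def S_def using True by simp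
      finally show ?thesis .
    qed
  qed
  show ?thesis using L R step1 step2 by (simp cong: sum.cong)
qed

theorem mainTheorem4:
  fixes l d r :: nat
    and x :: "nat \<Rightarrow> 'a::ring_1" and s :: "(nat \<Rightarrow> nat) \<Rightarrow> 'a" and c :: "nat \<Rightarrow> 'a"
    and A :: "nat list"
  assumes "l \<ge> 1" and "d \<ge> 1"
    and "sergeev_rels l d x s c"
    and "A \<noteq> []" and "distinct A" and "set A \<subseteq> {1..d}"
    and "even ((length A - 1) * l + r)"
  shows "A_r l x s c (last A # butlast A) r = A_r l x s c A r"
proof -
  define z where "z = last A"
  define B where "B = butlast A"
  have A: "A = B @ [z]" unfolding z_def B_def using assms(4) by simp
  have dist: "distinct (z # B)" using assms(5) A by auto
  have sub: "set (z # B) \<subseteq> {1..d}" using assms(6) A by auto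
  have rels: "(\<forall>i\<in>{1..d}. \<forall>j\<in>{1..d}. x i * x j = x j * x i) \<and> (\<forall>i\<in>{1..d}. \<forall>j\<in>{1..d}. i \<noteq> j \<longrightarrow> c i * c j = - (c j * c i))"
    using assms(3) unfolding sergeev_rels_def by (elim conjE) (intro conjI)
  have xc: "\<forall>i\<in>{1..d}. \<forall>j\<in>{1..d}. x i * x j = x j * x i" using rels by (rule conjunct1)
  have ca: "\<forall>i\<in>{1..d}. \<forall>j\<in>{1..d}. i \<noteq> j \<longrightarrow> c i * c j = - (c j * c i)" using rels by (rule conjunct2)
  have xcomm: "\<forall>j\<in>set B. x z * x j = x j * x z" using xc sub by auto
  have anti: "\<forall>j\<in>set B. c z * c j = - (c j * c z)"
  proof
    fix j assume j: "j \<in> set B"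
    have zz: "z \<in> {1..d}" "j \<in> {1..d}" "z \<noteq> j" using sub dist j by auto
    show "c z * c j = - (c j * c z)" using ca zz by blast
  qed
  have par: "even (length B * l + r)" using assms(7) A by simp
  have "A_r l x s c (z # B) r = A_r l x s c (B @ [z]) r"
    by (rule main_rot[OF xcomm anti dist assms(1) par])
  moreover have e1: "last A # butlast A = z # B" by (simp add: z_def B_def)
  ultimately show ?thesis by (simp only: e1 A[symmetric])
qed

end
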